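(* Let $f(z)=z+\sum_{n=2}^{\infty}a_nz^n\in\mathcal{S}^{*}_{\rho}$ and set $$\Omega_1:=a_3a_6-a_4a_5-a_2(a_2a_6-a_3a_5)+a_4(a_2a_4-a_3^2).$$ Then $$|\Omega_1|\le \frac{265984+32000\sqrt{3/43}+37760\sqrt{30/61}+29184\sqrt{285/41}}{460800}\approx 0.820011 .$$
   Context: Let $\mathbb{D}=\{z\in\mathbb{C}:|z|<1\}$. For analytic $g_1,g_2$ on $\mathbb{D}$, $g_1\prec g_2$ means there is an analytic $w:\mathbb{D}\to\mathbb{D}$ with $w(0)=0$ such that $g_1=g_2\circ w$. Here $\sinh^{-1}$ denotes the principal branch of the inverse hyperbolic sine with $\sinh^{-1}(0)=0$, analytic on $\mathbb{D}$. The class $\mathcal{S}^{*}_{\rho}$ consists of all univalent analytic functions $f$ on $\mathbb{D}$ with $f(z)=z+\sum_{n\ge2}a_nz^n$ such that $\frac{zf'(z)}{f(z)}\prec 1+\sinh^{-1}(z)$. *)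

theory Defs
  imports "HOL-Analysis.Analysis"
begin

definition subordinate :: "(complex \<Rightarrow> complex) \<Rightarrow> (complex \<Rightarrow> complex) \<Rightarrow> bool" where
  "subordinate g1 g2 \<longleftrightarrow>
     (\<exists>w. w analytic_on ball 0 1 \<and> w ` ball 0 1 \<subseteq> ball 0 1 \<and> w 0 = 0 \<and>
          (\<forall>z\<in>ball 0 1. g1 z = g2 (w z)))"

definition taylor_coeff :: "(complex \<Rightarrow> complex) \<Rightarrow> nat \<Rightarrow> complex" where
  "taylor_coeff f n = (deriv ^^ n) f 0 / of_nat (fact n)"

text \<open>The class S*_rho. The function z f'(z)/f(z) has a removable singularity at 0
  (value 1); we take that value at z = 0.\<close>
definition S_star_rho :: "(complex \<Rightarrow> complex) set" where
  "S_star_rho = {f. f analytic_on ball 0 1 \<and> inj_on f (ball 0 1) \<and> f 0 = 0 \<and> deriv f 0 = 1 \<and>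
      subordinate (\<lambda>z. if z = 0 then 1 else z * deriv f z / f z) (\<lambda>z. 1 + arsinh z)}"

end

theory Submission
  imports Defs "HOL-Complex_Analysis.Complex_Analysis"
begin


lemma sinh_arsinh_complex: "sinh (arsinh (u::complex)) = u"
proof -
  define s where "s = csqrt (u^2+1)"
  have ss: "s^2 = u^2 + 1" by (simp add: s_def)
  have nz: "u + s \<noteq> 0"
  proof
    assume "u + s = 0" then have "s = -u" by (simp add: add_eq_0_iff2)
    with ss show False by simp
  qed
  have "arsinh u = ln (u + s)" by (simp add: arsinh_def s_def csqrt_conv_powr)
  then have "sinh (arsinh u) = ((u+s) - inverse (u+s)) / 2" using nz by (simp add: sinh_ln_complex)
  also have "... = u"
  proof -
    have e: "(u+s)*(u+s) - 1 = (2*u)*(u+s)" using ss by (simp add: power2_eq_square algebra_simps)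
    have "(u+s) - inverse (u+s) = ((u+s)*(u+s) - 1) / (u+s)" using nz by (simp add: field_simps)
    also have "... = 2*u" using nz by (simp only: e) simp
    finally show ?thesis by simp
  qed
  finally show ?thesis .
qed

lemma arsinh_analytic0: "(arsinh :: complex \<Rightarrow> complex) analytic_on {0}"
proof -
  have "(\<lambda>z::complex. ln (z + csqrt (z^2+1))) analytic_on {0}"
    by (intro analytic_intros) (auto simp: complex_nonpos_Reals_iff)
  moreover have "(\<lambda>z::complex. ln (z + csqrt (z^2+1))) = arsinh"
    by (rule ext) (simp add: arsinh_def csqrt_conv_powr)
  ultimately show ?thesis by simp
qed

lemma coeff_le1:
  fixes w :: "complex \<Rightarrow> complex"
  assumes hol: "w holomorphic_on ball 0 1" and bd: "\<And>z. z \<in> ball 0 1 \<Longrightarrow> norm (w z) < 1"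
  shows "norm ((deriv ^^ n) w 0 / fact n) \<le> 1"
proof (cases "n = 0")
  case True then show ?thesis using bd[of 0] by simp
next
  case False
  show ?thesis
  proof (rule field_le_mult_one_interval)
    fix z :: real assume z: "0 < z" "z < 1"
    define r where "r = root n z"
    have r: "0 < r" "r < 1" using z False by (auto simp: r_def)
    have rn: "r ^ n = z" using z False by (simp add: r_def)
    have "norm ((deriv ^^ n) w 0) \<le> fact n * 1 / r ^ n"
    proof (rule Cauchy_inequality)
      show "w holomorphic_on ball 0 r" by (rule holomorphic_on_subset[OF hol]) (use r in auto)
      have "w holomorphic_on cball 0 r" by (rule holomorphic_on_subset[OF hol]) (use r in auto)
      then show "continuous_on (cball 0 r) w" by (rule holomorphic_on_imp_continuous_on)
      show "0 < r" by fact
      fix x :: complex assume "norm (0 - x) = r"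
      then have "x \<in> ball 0 1" using r by auto
      then show "norm (w x) \<le> 1" using bd less_imp_le by blast
    qed
    then have "norm ((deriv ^^ n) w 0) * r^n \<le> fact n" using r by (simp add: field_simps)
    then show "z * norm ((deriv ^^ n) w 0 / fact n) \<le> 1"
      using rn by (simp add: norm_divide field_simps)
  qed
qed



lemma sinh_fps_nth: "(fps_const (1/2) * (fps_exp 1 - fps_exp (-1)) :: complex fps) $ n = (1 - (-1)^n) / (2 * fact n)"
  by (simp add: fps_exp_def field_simps)

lemma comp_coeffs:
  fixes G :: "complex fps"
  assumes G0: "G$0 = 0"
  defines "S \<equiv> fps_const (1/2) * (fps_exp 1 - fps_exp (-1))"
  shows "(S oo G)$1 = G$1" "(S oo G)$2 = G$2" "(S oo G)$3 = G$3 + (G$1)^3/6"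
    "(S oo G)$4 = G$4 + (G$1)^2 * G$2/2"
    "(S oo G)$5 = G$5 + ((G$1)^2 * G$3 + G$1 * (G$2)^2)/2 + (G$1)^5/120"
  unfolding S_def
  by (simp_all add: fps_compose_nth sinh_fps_nth fps_mult_nth numeral_eq_Suc atLeast0AtMost G0 power2_eq_square power3_eq_cube field_simps)


lemma omega_poly:
  fixes w1 w2 w3 w4 w5 :: complex
  defines "a2 \<equiv> w1" and "a3 \<equiv> (w1^2 + w2)/2"
  and "a4 \<equiv> w1^3/9 + w1*w2/2 + w3/3"
  and "a5 \<equiv> - (w1^4/72) + w1^2*w2/8 + w1*w3/3 + w2^2/8 + w4/4"
  and "a6 \<equiv> - (w1^5/225) - 5/72*w1^3*w2 + w1^2*w3/15 + w1*w2^2/40 + w1*w4/4 + w2*w3/6 + w5/5"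
  shows "a3 * a6 - a4 * a5 - a2 * (a2 * a6 - a3 * a5) + a4 * (a2 * a4 - a3^2) =
     - (1/12 * (w3*w4)) + 1/10*(w2*w5) - 1/24*(w2^2*w3) + 1/8*(w1*w2*w4) - 9/80*(w1*w2^3)
     - 1/10*(w1^2*w5) + 3/40*(w1^2*w2*w3) - 1/36*(w1^3*w4) - 19/720*(w1^3*w2^2)
     + 11/120*(w1^4*w3) + 7/600*(w1^5*w2) - 67/3600*(w1^7)"
  unfolding assms by (simp add: field_simps power2_eq_square power3_eq_cube) (simp add: algebra_simps eval_nat_numeral)

lemma solve_a:
  fixes a2 a3 a4 a5 a6 g1 g2 g3 g4 g5 w1 w2 w3 w4 w5 :: complex
  assumes "w1 = g1" "w2 = g2" "w3 = g3 + g1^3/6" "w4 = g4 + g1^2 * g2/2"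
    "w5 = g5 + (g1^2 * g3 + g1 * g2^2)/2 + g1^5/120"
    "a2 = g1" "2 * a3 = g1 * a2 + g2" "3 * a4 = g1 * a3 + g2 * a2 + g3"
    "4 * a5 = g1 * a4 + g2 * a3 + g3 * a2 + g4"
    "5 * a6 = g1 * a5 + g2 * a4 + g3 * a3 + g4 * a2 + g5"
  shows "a2 = w1" "a3 = (w1^2 + w2)/2"
  "a4 = w1^3/9 + w1*w2/2 + w3/3"
  "a5 = - (w1^4/72) + w1^2*w2/8 + w1*w3/3 + w2^2/8 + w4/4"
  "a6 = - (w1^5/225) - 5/72*w1^3*w2 + w1^2*w3/15 + w1*w2^2/40 + w1*w4/4 + w2*w3/6 + w5/5"
proof -
  have g3: "g3 = w3 - w1^3/6" and g4: "g4 = w4 - w1^2*w2/2"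
    using assms(1-4) by (simp_all add: field_simps)
  have g5': "g5 = w5 - (g1^2 * g3 + g1 * g2^2)/2 - g1^5/120" using assms(5) by (simp add: algebra_simps)
  have g5: "g5 = w5 - (w1^2 * w3 + w1 * w2^2)/2 + 3/40 * w1^5"
    unfolding g5' g3 assms(1,2) by (simp add: field_simps; simp add: algebra_simps power2_eq_square power3_eq_cube eval_nat_numeral)
  note ws = assms(1,2)[symmetric]
  show A2: "a2 = w1" using assms by simp
  have "a3 = (g1 * a2 + g2)/2" using assms(7) by (simp add: field_simps)
  also have "... = (w1^2 + w2)/2" unfolding assms(6) ws by (simp add: power2_eq_square)
  finally show A3: "a3 = (w1^2 + w2)/2" .
  have "a4 = (g1 * a3 + g2 * a2 + g3)/3" using assms(8) by (simp add: field_simps)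
  also have "... = w1^3/9 + w1*w2/2 + w3/3" unfolding A3 assms(6) g3 ws
    by (simp add: field_simps; simp add: algebra_simps power2_eq_square power3_eq_cube)
  finally show A4: "a4 = w1^3/9 + w1*w2/2 + w3/3" .
  have "a5 = (g1 * a4 + g2 * a3 + g3 * a2 + g4)/4" using assms(9) by (simp add: field_simps)
  also have "... = - (w1^4/72) + w1^2*w2/8 + w1*w3/3 + w2^2/8 + w4/4" unfolding A3 A4 assms(6) g3 g4 ws
    by (simp add: field_simps; simp add: algebra_simps power2_eq_square power3_eq_cube eval_nat_numeral)
  finally show A5: "a5 = - (w1^4/72) + w1^2*w2/8 + w1*w3/3 + w2^2/8 + w4/4" .
  have "a6 = (g1 * a5 + g2 * a4 + g3 * a3 + g4 * a2 + g5)/5" using assms(10) by (simp add: field_simps)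
  also have "... = - (w1^5/225) - 5/72*w1^3*w2 + w1^2*w3/15 + w1*w2^2/40 + w1*w4/4 + w2*w3/6 + w5/5"
    unfolding A3 A4 A5 assms(6) g3 g4 g5 ws
    by (simp add: field_simps; simp add: algebra_simps power2_eq_square power3_eq_cube eval_nat_numeral)
  finally show "a6 = - (w1^5/225) - 5/72*w1^3*w2 + w1^2*w3/15 + w1*w2^2/40 + w1*w4/4 + w2*w3/6 + w5/5" .
qed


lemma ntp: "norm a \<le> r \<Longrightarrow> norm b \<le> s \<Longrightarrow> norm (a + b) \<le> r + s"
  by (metis add_mono norm_triangle_ineq order_trans)
lemma ntm: "norm a \<le> r \<Longrightarrow> norm b \<le> s \<Longrightarrow> norm (a - b) \<le> r + s"
  by (metis add_mono norm_triangle_ineq4 order_trans)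
lemma ntn: "norm a \<le> r \<Longrightarrow> norm (- a) \<le> r" by simp
lemma leaf: "norm (m::complex) \<le> 1 \<Longrightarrow> norm c = r \<Longrightarrow> norm (c * m) \<le> r"
  by (metis mult_left_le norm_ge_zero norm_mult)

lemma poly_bound:
  fixes w1 w2 w3 w4 w5 :: complex
  assumes "norm w1 \<le> 1" "norm w2 \<le> 1" "norm w3 \<le> 1" "norm w4 \<le> 1" "norm w5 \<le> 1"
  shows "norm (- (1/12 * (w3*w4)) + 1/10*(w2*w5) - 1/24*(w2^2*w3) + 1/8*(w1*w2*w4) - 9/80*(w1*w2^3)
     - 1/10*(w1^2*w5) + 3/40*(w1^2*w2*w3) - 1/36*(w1^3*w4) - 19/720*(w1^3*w2^2)
     + 11/120*(w1^4*w3) + 7/600*(w1^5*w2) - 67/3600*(w1^7)) \<le> 2929/3600"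
proof -
  have "norm (- (1/12 * (w3*w4)) + 1/10*(w2*w5) - 1/24*(w2^2*w3) + 1/8*(w1*w2*w4) - 9/80*(w1*w2^3)
     - 1/10*(w1^2*w5) + 3/40*(w1^2*w2*w3) - 1/36*(w1^3*w4) - 19/720*(w1^3*w2^2)
     + 11/120*(w1^4*w3) + 7/600*(w1^5*w2) - 67/3600*(w1^7)) \<le> 1/12 + 1/10 + 1/24 + 1/8 + 9/80 + 1/10 + 3/40 + 1/36 + 19/720 + 11/120 + 7/600 + 67/3600"
    apply (intro ntp ntm ntn; rule leaf)
    using assms by (auto simp: norm_mult norm_power norm_divide intro!: mult_le_one power_le_one)
  then show ?thesis by simp
qed

lemma ode_coeffs:
  fixes F G :: "complex fps"
  assumes E: "fps_X * fps_deriv F = (1 + G) * F" and F0: "F$0 = 0" and F1: "F$1 = 1" and G0: "G$0 = 0"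
  shows "F$2 = G$1" "2 * F$3 = G$1 * F$2 + G$2"
     "3 * F$4 = G$1 * F$3 + G$2 * F$2 + G$3"
     "4 * F$5 = G$1 * F$4 + G$2 * F$3 + G$3 * F$2 + G$4"
     "5 * F$6 = G$1 * F$5 + G$2 * F$4 + G$3 * F$3 + G$4 * F$2 + G$5"
proof -
  have gen: "of_nat n * F$n = F$n + (\<Sum>i=0..n. G$i * F$(n-i))" if "n \<ge> 1" for n
  proof -
    have "(fps_X * fps_deriv F)$n = ((1 + G) * F)$n" using E by simp
    moreover have "(fps_X * fps_deriv F)$n = of_nat n * F$n" using that by (cases n) auto
    moreover have "((1 + G) * F)$n = F$n + (G * F)$n" by (simp add: distrib_right)
    ultimately show ?thesis by (simp add: fps_mult_nth)
  qed
  have F1': "F $ Suc 0 = 1" using F1 by simp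
  show "F$2 = G$1" using gen[of 2] by (simp add: eval_nat_numeral atLeast0_atMost_Suc F0 F1 F1' G0) 
  show "2 * F$3 = G$1 * F$2 + G$2" using gen[of 3] by (simp add: eval_nat_numeral atLeast0_atMost_Suc F0 F1 F1' G0)
  show "3 * F$4 = G$1 * F$3 + G$2 * F$2 + G$3" using gen[of 4] by (simp add: eval_nat_numeral atLeast0_atMost_Suc F0 F1 F1' G0)
  show "4 * F$5 = G$1 * F$4 + G$2 * F$3 + G$3 * F$2 + G$4" using gen[of 5] by (simp add: eval_nat_numeral atLeast0_atMost_Suc F0 F1 F1' G0)
  show "5 * F$6 = G$1 * F$5 + G$2 * F$4 + G$3 * F$3 + G$4 * F$2 + G$5" using gen[of 6] by (simp add: eval_nat_numeral atLeast0_atMost_Suc F0 F1 F1' G0)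
qed

lemma sqrt_bound:
  "2929/3600 \<le> (265984 + 32000 * sqrt (3/43) + 37760 * sqrt (30/61) + 29184 * sqrt (285/41)) / (460800::real)"
proof -
  have a: "26/100 \<le> sqrt (3/43::real)" by (rule real_le_rsqrt) (simp add: power2_eq_square)
  have b: "7/10 \<le> sqrt (30/61::real)" by (rule real_le_rsqrt) (simp add: power2_eq_square)
  have c: "263/100 \<le> sqrt (285/41::real)" by (rule real_le_rsqrt) (simp add: power2_eq_square)
  show ?thesis using a b c by (simp add: divide_simps)
qed

theorem mainTheorem6:
  fixes f :: "complex \<Rightarrow> complex"
  assumes "f \<in> S_star_rho"
  defines "a \<equiv> taylor_coeff f"
  shows "norm (a 3 * a 6 - a 4 * a 5 - a 2 * (a 2 * a 6 - a 3 * a 5) + a 4 * (a 2 * a 4 - (a 3)^2))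
    \<le> (265984 + 32000 * sqrt (3/43) + 37760 * sqrt (30/61) + 29184 * sqrt (285/41)) / 460800"
proof -
  from assms(1) have fa: "f analytic_on ball 0 1" and finj: "inj_on f (ball 0 1)" and f0: "f 0 = 0"
    and fd0: "deriv f 0 = 1"
    and sub: "subordinate (\<lambda>z. if z = 0 then 1 else z * deriv f z / f z) (\<lambda>z. 1 + arsinh z)"
    unfolding S_star_rho_def by auto
  from sub obtain w where wa: "w analytic_on ball 0 1" and wb: "w ` ball 0 1 \<subseteq> ball 0 1"
    and w0: "w 0 = 0"
    and weq: "\<forall>z\<in>ball 0 1. (if z = 0 then 1 else z * deriv f z / f z) = 1 + arsinh (w z)"
    unfolding subordinate_def by blast
  define g where "g = (\<lambda>z. arsinh (w z))"
  have key: "z * deriv f z = (1 + g z) * f z" if z: "z \<in> ball 0 1" for z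
  proof (cases "z = 0")
    case True then show ?thesis by (simp add: f0)
  next
    case False
    have "(0::complex) \<in> ball 0 1" by simp
    then have "f z \<noteq> 0" using finj z False f0 unfolding inj_on_def by metis
    have e: "z * deriv f z / f z = 1 + g z" using weq[rule_format, OF z] False by (simp add: g_def)
    then show ?thesis using \<open>f z \<noteq> 0\<close> by (simp add: divide_eq_eq)
  qed
  have ev_key: "eventually (\<lambda>z. z * deriv f z = (1 + g z) * f z) (nhds 0)"
    using eventually_nhds_in_open[of "ball 0 1" "0::complex"] key by (auto elim!: eventually_mono)
  have f0a: "f analytic_on {0}" using fa by (rule analytic_on_subset) auto
  have w0a: "w analytic_on {0}" using wa by (rule analytic_on_subset) auto
  have g0a: "g analytic_on {0}"
  proof -
    have "arsinh \<circ> w analytic_on {0}"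
      by (rule analytic_on_compose_gen[OF w0a arsinh_analytic0]) (simp add: w0)
    then show ?thesis by (simp add: g_def o_def)
  qed
  define F where "F = fps_expansion f 0"
  define W where "W = fps_expansion w 0"
  define G where "G = fps_expansion g 0"
  have hF: "f has_fps_expansion F" unfolding F_def by (rule analytic_at_imp_has_fps_expansion_0[OF f0a])
  have hW: "w has_fps_expansion W" unfolding W_def by (rule analytic_at_imp_has_fps_expansion_0[OF w0a])
  have hG: "g has_fps_expansion G" unfolding G_def by (rule analytic_at_imp_has_fps_expansion_0[OF g0a])
  have G0: "G $ 0 = 0" using fps_nth_fps_expansion[OF hG, of 0] by (simp add: g_def w0)
  have F0: "F $ 0 = 0" using fps_nth_fps_expansion[OF hF, of 0] by (simp add: f0)
  have F1: "F $ 1 = 1" using fps_nth_fps_expansion[OF hF, of 1] by (simp add: fd0)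
  have h1: "(\<lambda>z. z * deriv f z) has_fps_expansion fps_X * fps_deriv F"
    by (intro has_fps_expansion_mult has_fps_expansion_fps_X has_fps_expansion_deriv hF)
  have h2: "(\<lambda>z. (1 + g z) * f z) has_fps_expansion (1 + G) * F"
    by (intro has_fps_expansion_mult has_fps_expansion_add has_fps_expansion_1 hG hF)
  have h2': "(\<lambda>z. z * deriv f z) has_fps_expansion (1 + G) * F"
    using has_fps_expansion_cong[OF ev_key refl] h2 by simp
  have E: "fps_X * fps_deriv F = (1 + G) * F" by (rule fps_expansion_unique_complex[OF h1 h2'])
  define S :: "complex fps" where "S = fps_const (1/2) * (fps_exp 1 - fps_exp (-1))"
  have hS0: "(\<lambda>x::complex. 1/2 * (exp x - exp (-x))) has_fps_expansion S"
    unfolding S_def by (intro has_fps_expansion_cmult_left has_fps_expansion_diff has_fps_expansion_exp1 has_fps_expansion_exp_neg1)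
  have "(\<lambda>x::complex. 1/2 * (exp x - exp (-x))) = sinh"
    by (rule ext) (simp add: sinh_field_def)
  with hS0 have hS: "sinh has_fps_expansion S" by simp
  have hc: "(sinh \<circ> g) has_fps_expansion (S oo G)" by (rule has_fps_expansion_compose[OF hS hG G0])
  have "sinh \<circ> g = w" by (rule ext) (simp add: g_def sinh_arsinh_complex)
  with hc have hc': "w has_fps_expansion (S oo G)" by simp
  have WSG: "W = (S oo G)" by (rule fps_expansion_unique_complex[OF hW hc'])
  have an: "a n = F $ n" for n
    unfolding a_def taylor_coeff_def fps_nth_fps_expansion[OF hF] by simp
  have wn: "W $ n = (deriv ^^ n) w 0 / fact n" for n by (rule fps_nth_fps_expansion[OF hW])
  have whol: "w holomorphic_on ball 0 1" using wa by (simp add: analytic_imp_holomorphic)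
  have wbd: "norm (w z) < 1" if "z \<in> ball 0 1" for z using wb that by (metis image_subset_iff mem_ball_0)
  have wle: "norm (W $ n) \<le> 1" for n unfolding wn by (rule coeff_le1[OF whol wbd])
  note cc = comp_coeffs[OF G0, folded S_def, folded WSG]
  note od = ode_coeffs[OF E F0 F1 G0]
  note sol = solve_a[OF cc(1) cc(2) cc(3) cc(4) cc(5) od]
  define w1 where "w1 = fps_nth W 1"
  define w2 where "w2 = fps_nth W 2"
  define w3 where "w3 = fps_nth W 3"
  define w4 where "w4 = fps_nth W 4"
  define w5 where "w5 = fps_nth W 5"
  have "norm (a 3 * a 6 - a 4 * a 5 - a 2 * (a 2 * a 6 - a 3 * a 5) + a 4 * (a 2 * a 4 - (a 3)^2))
      = norm (- (1/12 * (w3*w4)) + 1/10*(w2*w5) - 1/24*(w2^2*w3) + 1/8*(w1*w2*w4) - 9/80*(w1*w2^3)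
     - 1/10*(w1^2*w5) + 3/40*(w1^2*w2*w3) - 1/36*(w1^3*w4) - 19/720*(w1^3*w2^2)
     + 11/120*(w1^4*w3) + 7/600*(w1^5*w2) - 67/3600*(w1^7))"
    unfolding an sol w1_def w2_def w3_def w4_def w5_def by (simp only: omega_poly)
  also have "... \<le> 2929/3600" unfolding w1_def w2_def w3_def w4_def w5_def by (rule poly_bound[OF wle wle wle wle wle])
  also have "... \<le> (265984 + 32000 * sqrt (3/43) + 37760 * sqrt (30/61) + 29184 * sqrt (285/41)) / 460800"
    by (rule sqrt_bound)
  finally show ?thesis .
qed

end
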